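(* Let $S_S=S_C=\{0\}$, let $d\in(0,\frac12)$, and let $G_0=(V_0,E_0)$ be a seed geometric graph such that some vertex $u\in V_0$ is isolated ($\deg(u)=0$). Then for every dynamic graph $(G_t=(V_t,E_t))_{t\geq0}$ generated by D3G3 from $G_0$ with these parameters, $n_t=|V_t|\leq\frac{8}{\pi d^2}$ for all $t>0$.
   Context: Let $\mathbb{T}=[0,1)^2$ be the unit torus with toroidal Euclidean distance $\mathrm{dist}$; a geometric graph with threshold $d$ on a finite point set $V\subset\mathbb{T}$ has edges $\{u,v\}$, $u\neq v$, with $\mathrm{dist}(u,v)\leq d$. D3G3 takes $d$, sets $S_S,S_C\subseteq\mathbb{N}$ and a non-null seed geometric graph $G_0$. From $G_t=(V_t,E_t)$, $G_{t+1}$ is obtained by applying simultaneously to each $v\in V_t$ (with $\deg(v)$ its degree in $G_t$): $v\in V_{t+1}$ (same position) iff $\deg(v)\in S_S$; if $\deg(v)\in S_C$, a new vertex (distinct from all previous ones) is added to $V_{t+1}$ at a uniformly random position in $\mathbb{T}$. No other vertices are in $V_{t+1}$; $E_{t+1}$ is given by the geometric rule. *)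

theory Defs
  imports Complex_Main
begin

definition torus :: "(real \<times> real) set" where
  "torus = {0..<1} \<times> {0..<1}"

definition tdist1 :: "real \<Rightarrow> real \<Rightarrow> real" where
  "tdist1 a b = min \<bar>a - b\<bar> (1 - \<bar>a - b\<bar>)"

definition tdist :: "real \<times> real \<Rightarrow> real \<times> real \<Rightarrow> real" where
  "tdist p q = sqrt ((tdist1 (fst p) (fst q))\<^sup>2 + (tdist1 (snd p) (snd q))\<^sup>2)"

definition gdeg :: "real \<Rightarrow> ('v \<Rightarrow> real \<times> real) \<Rightarrow> 'v set \<Rightarrow> 'v \<Rightarrow> nat" where
  "gdeg d pos V v = card {w \<in> V. w \<noteq> v \<and> tdist (pos v) (pos w) \<le> d}"

text \<open>New vertices are fresh (not present at any earlier
  time) and get arbitrary positions in the torus (every realisation of the random choice).\<close>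
definition d3g3_run ::
  "real \<Rightarrow> nat set \<Rightarrow> nat set \<Rightarrow> (nat \<Rightarrow> 'v set) \<Rightarrow> ('v \<Rightarrow> real \<times> real) \<Rightarrow> bool" where
  "d3g3_run d SS SC V pos \<longleftrightarrow>
     finite (V 0) \<and> V 0 \<noteq> {} \<and>
     (\<forall>t. \<forall>v \<in> V t. pos v \<in> torus) \<and>
     (\<forall>t. \<exists>c. inj_on c {v \<in> V t. gdeg d pos (V t) v \<in> SC} \<and>
             (\<forall>v \<in> {v \<in> V t. gdeg d pos (V t) v \<in> SC}. \<forall>s \<le> t. c v \<notin> V s) \<and>
             V (Suc t) = {v \<in> V t. gdeg d pos (V t) v \<in> SS}
                          \<union> c ` {v \<in> V t. gdeg d pos (V t) v \<in> SC})"

end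

theory Submission
  imports Defs "HOL-Analysis.Analysis"
begin

definition shift :: "real \<times> real \<Rightarrow> nat \<times> nat \<Rightarrow> real \<times> real" where
  "shift x k = (fst x + real (fst k), snd x + real (snd k))"

lemma tdist1_le:
  assumes "a \<in> {0..<1}" "b \<in> {0..<1}"
  shows "tdist1 a b \<le> \<bar>(a + real i) - (b + real j)\<bar>"
proof (cases "i = j")
  case True then show ?thesis by (simp add: tdist1_def)
next
  case False
  then have "real i \<ge> real j + 1 \<or> real j \<ge> real i + 1" by linarith
  then show ?thesis using assms unfolding tdist1_def by auto
qed

lemma tdist_le_shift:
  assumes "x \<in> torus" "y \<in> torus"
  shows "tdist x y \<le> dist (shift x k) (shift y l)"
proof -
  obtain x1 x2 where x: "x = (x1,x2)" by fastforce
  obtain y1 y2 where y: "y = (y1,y2)" by fastforce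
  obtain k1 k2 where k: "k = (k1,k2)" by fastforce
  obtain l1 l2 where l: "l = (l1,l2)" by fastforce
  have h1: "tdist1 x1 y1 \<le> \<bar>(x1 + real k1) - (y1 + real l1)\<bar>"
    using assms x y by (intro tdist1_le) (auto simp: torus_def)
  have h2: "tdist1 x2 y2 \<le> \<bar>(x2 + real k2) - (y2 + real l2)\<bar>"
    using assms x y by (intro tdist1_le) (auto simp: torus_def)
  have p1: "0 \<le> tdist1 x1 y1" "0 \<le> tdist1 x2 y2" 
    using assms x y by (auto simp: tdist1_def torus_def)
  have "(tdist1 x1 y1)\<^sup>2 + (tdist1 x2 y2)\<^sup>2 \<le> (\<bar>(x1 + real k1) - (y1 + real l1)\<bar>)\<^sup>2 + (\<bar>(x2 + real k2) - (y2 + real l2)\<bar>)\<^sup>2"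
    by (intro add_mono power_mono h1 h2 p1)
  then show ?thesis
    by (simp add: x y k l shift_def tdist_def dist_Pair_Pair dist_real_def)
qed

lemma shift_far:
  assumes "k \<noteq> l"
  shows "1 \<le> dist (shift x k) (shift x l)"
proof -
  obtain k1 k2 where k: "k = (k1,k2)" by fastforce
  obtain l1 l2 where l: "l = (l1,l2)" by fastforce
  have "1 \<le> (real k1 - real l1)\<^sup>2 + (real k2 - real l2)\<^sup>2"
  proof (cases "k1 = l1")
    case True
    then have "k2 \<noteq> l2" using assms k l by auto
    then have "1 \<le> \<bar>real k2 - real l2\<bar>" by linarith
    then have "1 \<le> (real k2 - real l2)\<^sup>2"
      by (metis abs_ge_self abs_power2 le_trans one_le_power power2_abs)
    then show ?thesis by (smt (verit) zero_le_power2)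
  next
    case False
    then have "1 \<le> \<bar>real k1 - real l1\<bar>" by linarith
    then have "1 \<le> (real k1 - real l1)\<^sup>2"
      by (metis abs_ge_self abs_power2 le_trans one_le_power power2_abs)
    then show ?thesis by (smt (verit) zero_le_power2)
  qed
  then show ?thesis
    by (simp add: k l shift_def dist_Pair_Pair dist_real_def)
qed

lemma ball2: "r \<ge> 0 \<Longrightarrow> emeasure lborel (ball (c::real\<times>real) r) = ennreal (pi * r^2)"
  by (simp add: emeasure_ball unit_ball_vol_2 power2_eq_square)

lemma box2: "a \<le> b \<Longrightarrow> emeasure lborel (cbox (a,a) (b,b::real)) = ennreal ((b-a)^2)"
  by (simp add: emeasure_lborel_cbox_eq Basis_prod_def power2_eq_square)

lemma packing_M:
  fixes P :: "'a set" and q :: "'a \<Rightarrow> real \<times> real"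
  assumes fin: "finite P" and r: "0 < r" "2*r \<le> 1"
    and tor: "\<forall>v\<in>P. q v \<in> torus"
    and far: "\<forall>v\<in>P. \<forall>w\<in>P. v \<noteq> w \<longrightarrow> 2*r \<le> tdist (q v) (q w)"
  shows "real (card P) * (real M)^2 * (pi*r^2) \<le> (real M + 2*r)^2"
proof -
  define S where "S = P \<times> ({0..<M}\<times>{0..<M})"
  define F where "F = (\<lambda>(v,k). ball (shift (q v) k) r)"
  have finS: "finite S" using fin by (simp add: S_def)
  have cardS: "card S = card P * M^2" by (simp add: S_def card_cartesian_product power2_eq_square)
  have cdist: "2*r \<le> dist (shift (q v) k) (shift (q w) l)"
    if "(v,k) \<in> S" "(w,l) \<in> S" "(v,k) \<noteq> (w,l)" for v w k l
  proof (cases "v = w")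
    case True
    then have "k \<noteq> l" using that by auto
    then show ?thesis using shift_far[of k l "q v"] True r by simp
  next
    case False
    then show ?thesis using far tdist_le_shift[of "q v" "q w" k l] tor that
      by (force simp: S_def)
  qed
  have disj: "disjoint_family_on F S"
    unfolding disjoint_family_on_def
  proof (intro ballI impI)
    fix a b assume ab: "a \<in> S" "b \<in> S" "a \<noteq> b"
    obtain v k where a: "a = (v,k)" by (metis prod.exhaust)
    obtain w l where b: "b = (w,l)" by (metis prod.exhaust)
    have "2*r \<le> dist (shift (q v) k) (shift (q w) l)" using cdist ab a b by blast
    then show "F a \<inter> F b = {}"
      unfolding a b F_def using dist_triangle_less_add[of "shift (q v) k" _ r "shift (q w) l" r]
      by (auto simp: dist_commute)
  qed
  have sub: "(\<Union>i\<in>S. F i) \<subseteq> cbox (-r,-r) (real M + r, real M + r)"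
  proof
    fix z assume "z \<in> (\<Union>i\<in>S. F i)"
    then obtain v k where vk: "(v,k) \<in> S" "z \<in> ball (shift (q v) k) r" by (auto simp: F_def)
    let ?c = "shift (q v) k"
    have d: "dist (fst ?c) (fst z) < r" "dist (snd ?c) (snd z) < r"
      using vk(2) dist_fst_le[of ?c z] dist_snd_le[of ?c z] by auto
    have "q v \<in> torus" using vk tor by (auto simp: S_def)
    then have "0 \<le> fst ?c" "fst ?c \<le> real M" "0 \<le> snd ?c" "snd ?c \<le> real M"
      using vk(1) by (auto simp: torus_def shift_def S_def)
    then show "z \<in> cbox (-r,-r) (real M + r, real M + r)"
      using d by (cases z) (auto simp: cbox_Pair_eq dist_real_def)
  qed
  have "(\<Sum>i\<in>S. emeasure lborel (F i)) = emeasure lborel (\<Union>i\<in>S. F i)"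
    by (rule sum_emeasure) (use disj finS in \<open>auto simp: F_def\<close>)
  also have "\<dots> \<le> emeasure lborel (cbox (-r,-r) (real M + r, real M + r))"
    by (rule emeasure_mono[OF sub]) simp
  also have "\<dots> = ennreal ((real M + 2*r)^2)"
    using box2[of "-r" "real M + r"] r by simp
  finally have "(\<Sum>i\<in>S. emeasure lborel (F i)) \<le> ennreal ((real M + 2*r)^2)" .
  moreover have "(\<Sum>i\<in>S. emeasure lborel (F i)) = ennreal (real (card S) * (pi*r^2))"
  proof -
    have "(\<Sum>i\<in>S. emeasure lborel (F i)) = (\<Sum>i\<in>S. ennreal (pi*r^2))"
      by (rule sum.cong) (use r in \<open>auto simp: F_def ball2\<close>)
    also have "\<dots> = ennreal (real (card S) * (pi*r^2))"
      by (simp add: ennreal_of_nat_eq_real_of_nat ennreal_mult)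
    finally show ?thesis .
  qed
  ultimately have "real (card S) * (pi*r^2) \<le> (real M + 2*r)^2"
    by (simp add: ennreal_le_iff)
  then show ?thesis by (simp add: cardS)
qed

lemma packing:
  fixes P :: "'a set" and q :: "'a \<Rightarrow> real \<times> real"
  assumes fin: "finite P" and r: "0 < r" "2*r \<le> 1"
    and tor: "\<forall>v\<in>P. q v \<in> torus"
    and far: "\<forall>v\<in>P. \<forall>w\<in>P. v \<noteq> w \<longrightarrow> 2*r \<le> tdist (q v) (q w)"
  shows "real (card P) * (pi*r^2) \<le> 1"
proof (rule ccontr)
  define n where "n = real (card P) * (pi*r^2)"
  assume "\<not> real (card P) * (pi*r^2) \<le> 1"
  then have n1: "n > 1" by (simp add: n_def)
  obtain M0 :: nat where "8*r/(n-1) < real M0" using reals_Archimedean2 by blast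
  define M where "M = Suc M0"
  have M: "8*r/(n-1) < real M" "1 \<le> real M" using \<open>8*r/(n-1) < real M0\<close> by (auto simp: M_def)
  have h: "n * (real M)^2 \<le> (real M + 2*r)^2"
    using packing_M[OF fin r tor far, of M] by (simp add: n_def mult_ac)
  have "(real M + 2*r)^2 = (real M)^2 + 4*r*real M + 4*r*r" by (simp add: power2_eq_square algebra_simps)
  also have "4*r*r \<le> 4*r*real M" using r M by (intro mult_left_mono) auto
  finally have "n * (real M)^2 \<le> (real M)^2 + 8*r*real M" using h by linarith
  then have "(n - 1) * real M * real M \<le> 8*r*real M" by (simp add: power2_eq_square algebra_simps)
  then have "(n - 1) * real M \<le> 8*r" using M by (simp add: mult_le_cancel_right)
  moreover have "8*r < (n-1) * real M" using M n1 by (simp add: divide_less_eq mult.commute)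
  ultimately show False by linarith
qed

theorem theorem5:
  fixes d :: real and V :: "nat \<Rightarrow> 'v set" and pos :: "'v \<Rightarrow> real \<times> real"
  assumes "0 < d" and "d < 1/2"
    and "d3g3_run d {0} {0} V pos"
    and "\<exists>u \<in> V 0. gdeg d pos (V 0) u = 0"
  shows "\<forall>t > 0. real (card (V t)) \<le> 8 / (pi * d\<^sup>2)"
proof (intro allI impI)
  fix t :: nat assume "t > 0"
  then obtain s where t: "t = Suc s" using gr0_conv_Suc by blast
  note run = assms(3)[unfolded d3g3_run_def]
  define I where "I = (\<lambda>t. {v \<in> V t. gdeg d pos (V t) v \<in> {0}})"
  have fin: "finite (V t)" for t
  proof (induction t)
    case 0 then show ?case using run by simp
  next
    case (Suc t)
    obtain c where "V (Suc t) = {v \<in> V t. gdeg d pos (V t) v \<in> {0}} \<union> c ` {v \<in> V t. gdeg d pos (V t) v \<in> {0}}"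
      using run by blast
    then show ?case using Suc by simp
  qed
  obtain c where c: "inj_on c (I s)" "\<forall>v \<in> I s. \<forall>s' \<le> s. c v \<notin> V s'"
    "V (Suc s) = I s \<union> c ` I s"
    using run unfolding I_def by blast
  have finI: "finite (I s)" using fin[of s] by (simp add: I_def)
  have "c ` I s \<inter> I s = {}" using c(2) by (auto simp: I_def)
  then have card: "card (V t) = 2 * card (I s)"
    using c(1,3) finI t by (simp add: card_Un_disjoint card_image Int_commute)
  have far: "\<forall>v\<in>I s. \<forall>w\<in>I s. v \<noteq> w \<longrightarrow> 2*(d/2) \<le> tdist (pos v) (pos w)"
  proof (intro ballI impI)
    fix v w assume vw: "v \<in> I s" "w \<in> I s" "v \<noteq> w"
    have "card {w \<in> V s. w \<noteq> v \<and> tdist (pos v) (pos w) \<le> d} = 0"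
      using vw(1) by (simp add: I_def gdeg_def)
    then have "{w \<in> V s. w \<noteq> v \<and> tdist (pos v) (pos w) \<le> d} = {}" using fin[of s] by simp
    then show "2*(d/2) \<le> tdist (pos v) (pos w)" using vw by (auto simp: I_def)
  qed
  have tor: "\<forall>v\<in>I s. pos v \<in> torus" using run by (auto simp: I_def)
  have "real (card (I s)) * (pi*(d/2)^2) \<le> 1"
    using packing[OF finI _ _ tor far] assms(1,2) by simp
  then have "real (card (I s)) * (pi*d^2) \<le> 4" by (simp add: power2_eq_square)
  then have "real (card (I s)) \<le> 4 / (pi*d^2)" using assms(1) by (simp add: le_divide_eq)
  then show "real (card (V t)) \<le> 8 / (pi * d\<^sup>2)" using card by simp
qed

end
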